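(* For every $r>0$, every nonzero $\vec\theta\in\mathbb C^m$ and every $N\ge0$, there exists $\eta\in\mathrm{Sqz}^m$ such that \[{}^t(G_\eta\vec\mu_{\vec\theta})\,\Sigma_{\eta,N}^{-1}\,(G_\eta\vec\mu_{\vec\theta})=\frac{4r^2\|\vec\theta\|^2}{(2N+1)r^2+1}.\]
   Context: $\mathrm{Sqz}^m$ is the set of complex $2m\times2m$ matrices $\eta=\begin{pmatrix}A&S\\ \bar S&\bar A\end{pmatrix}$ with $A\in\mathbb C^{m\times m}$ anti-hermitian ($A^*=-A$) and $S\in\mathbb C^{m\times m}$ symmetric. For $\vec\theta\in\mathbb C^m$, $\vec\mu_{\vec\theta}=({}^t\mathrm{Re}\,\vec\theta,{}^t\mathrm{Im}\,\vec\theta)^t\in\mathbb R^{2m}$. Further \[G_\eta=\exp\begin{pmatrix}\mathrm{Re}A+\mathrm{Re}S&-\mathrm{Im}A+\mathrm{Im}S\\ \mathrm{Im}A+\mathrm{Im}S&\mathrm{Re}A-\mathrm{Re}S\end{pmatrix},\qquad \Sigma_{\eta,N}=\frac{2N+1}{4}G_\eta\,{}^tG_\eta+\frac14I_{2m}.\] *)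

theory Defs
  imports "HOL-Analysis.Analysis"
begin

text \<open>Real 2m x 2m matrices are indexed by the type 'm + 'm:
  Inl i is the i-th "real part" coordinate, Inr i the i-th "imaginary part" coordinate.\<close>

primrec mat_pow :: "'a::semiring_1 ^'n::finite^'n \<Rightarrow> nat \<Rightarrow> 'a^'n^'n" where
  "mat_pow M 0 = mat 1"
| "mat_pow M (Suc k) = M ** mat_pow M k"

definition mat_exp :: "real^'n::finite^'n \<Rightarrow> real^'n^'n" where
  "mat_exp M = (\<Sum>k. (1 / fact k) *\<^sub>R mat_pow M k)"

definition block :: "'a^'m::finite^'m \<Rightarrow> 'a^'m^'m \<Rightarrow> 'a^'m^'m \<Rightarrow> 'a^'m^'m
                     \<Rightarrow> 'a^('m + 'm)^('m + 'm)" where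
  "block P Q R T = (\<chi> a b. case a of
       Inl i \<Rightarrow> (case b of Inl j \<Rightarrow> P $ i $ j | Inr j \<Rightarrow> Q $ i $ j)
     | Inr i \<Rightarrow> (case b of Inl j \<Rightarrow> R $ i $ j | Inr j \<Rightarrow> T $ i $ j))"

definition anti_hermitian :: "complex^'m::finite^'m \<Rightarrow> bool" where
  "anti_hermitian A \<longleftrightarrow> (\<forall>i j. cnj (A $ j $ i) = - (A $ i $ j))"

definition symmetric_mat :: "'a^'m::finite^'m \<Rightarrow> bool" where
  "symmetric_mat S \<longleftrightarrow> transpose S = S"

definition cnj_mat :: "complex^'m::finite^'m \<Rightarrow> complex^'m^'m" where
  "cnj_mat A = (\<chi> i j. cnj (A $ i $ j))"

definition Re_mat :: "complex^'m::finite^'m \<Rightarrow> real^'m^'m" where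
  "Re_mat A = (\<chi> i j. Re (A $ i $ j))"

definition Im_mat :: "complex^'m::finite^'m \<Rightarrow> real^'m^'m" where
  "Im_mat A = (\<chi> i j. Im (A $ i $ j))"

definition Sqz :: "(complex^('m::finite + 'm)^('m + 'm)) set" where
  "Sqz = {block A S (cnj_mat S) (cnj_mat A) | A S. anti_hermitian A \<and> symmetric_mat S}"

definition blkA :: "complex^('m::finite + 'm)^('m + 'm) \<Rightarrow> complex^'m^'m" where
  "blkA \<eta> = (\<chi> i j. \<eta> $ Inl i $ Inl j)"

definition blkS :: "complex^('m::finite + 'm)^('m + 'm) \<Rightarrow> complex^'m^'m" where
  "blkS \<eta> = (\<chi> i j. \<eta> $ Inl i $ Inr j)"

definition G :: "complex^('m::finite + 'm)^('m + 'm) \<Rightarrow> real^('m + 'm)^('m + 'm)" where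
  "G \<eta> = (let A = blkA \<eta>; S = blkS \<eta> in
     mat_exp (block (Re_mat A + Re_mat S) (- Im_mat A + Im_mat S)
                    (Im_mat A + Im_mat S) (Re_mat A - Re_mat S)))"

definition Sigma_mat :: "complex^('m::finite + 'm)^('m + 'm) \<Rightarrow> real \<Rightarrow> real^('m + 'm)^('m + 'm)" where
  "Sigma_mat \<eta> N = ((2 * N + 1) / 4) *\<^sub>R (G \<eta> ** transpose (G \<eta>)) + (1/4) *\<^sub>R mat 1"

definition mu :: "complex^'m::finite \<Rightarrow> real^('m + 'm)" where
  "mu \<theta> = (\<chi> a. case a of Inl i \<Rightarrow> Re (\<theta> $ i) | Inr i \<Rightarrow> Im (\<theta> $ i))"

end

theory Submission imports Defs begin


lemma mm_scaleR_right: "(A::real^'n^'m) ** (c *\<^sub>R B) = c *\<^sub>R (A ** B)"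
  by (simp add: matrix_matrix_mult_def vec_eq_iff sum_distrib_left mult.left_commute)

lemma linear_mv: "linear (\<lambda>A::real^'n^'m. A *v v)"
  by (simp add: linear_iff matrix_vector_mult_def vec_eq_iff sum.distrib algebra_simps sum_distrib_left)

lemma linear_tmv: "linear (\<lambda>A::real^'n^'m. transpose A *v v)"
  by (simp add: linear_iff vector_matrix_mult_def vec_eq_iff sum.distrib algebra_simps sum_distrib_left)

lemma mat_pow_explicit:
  fixes M :: "real^'n^'n"
  assumes "M ** M = (s^2) *\<^sub>R mat 1"
  shows "mat_pow M k = (if even k then s^k *\<^sub>R mat 1 else s^(k-1) *\<^sub>R M)"
proof (induction k)
  case 0 then show ?case by simp
next
  case (Suc k)
  show ?case
  proof (cases "even k")
    case True then show ?thesis using Suc by (simp add: mm_scaleR_right)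
  next
    case False
    then obtain j where k: "k = Suc (2*j)" by (metis oddE Suc_eq_plus1)
    show ?thesis using Suc False assms by (simp add: mm_scaleR_right k power_add power_mult power2_eq_square)
  qed
qed

lemma mat_exp_lin:
  fixes M :: "real^'n^'n" and f :: "real^'n^'n \<Rightarrow> real^'n"
  assumes MM: "M ** M = (s^2) *\<^sub>R mat 1" and f: "linear f"
    and fk: "\<And>k. f (mat_pow M k) = s^k *\<^sub>R w"
  shows "f (mat_exp M) = exp s *\<^sub>R w"
proof -
  define c where "c = max 1 \<bar>s\<bar>"
  have c1: "c \<ge> 1" by (simp add: c_def)
  have bnd: "norm ((1 / fact k) *\<^sub>R mat_pow M k) \<le> (norm (mat 1 :: real^'n^'n) + norm M) * (c^k / fact k)" for k
  proof -
    have "norm (mat_pow M k) \<le> (norm (mat 1 :: real^'n^'n) + norm M) * c^k"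
    proof (cases "even k")
      case True
      have "\<bar>s\<bar>^k \<le> c^k" by (simp add: c_def power_mono)
      moreover have "1 \<le> c^k" using c1 by simp
      ultimately show ?thesis using True mat_pow_explicit[OF MM, of k]
        by (simp add: power_abs) (smt (verit, best) mult_left_mono mult_right_mono norm_ge_zero distrib_right mult.commute)
    next
      case False
      have "\<bar>s\<bar>^(k-1) \<le> c^(k-1)" by (simp add: c_def power_mono)
      also have "\<dots> \<le> c^k" using c1 by (simp add: power_increasing)
      finally have "\<bar>s\<bar>^(k-1) \<le> c^k" .
      moreover have "1 \<le> c^k" using c1 by simp
      ultimately show ?thesis using False mat_pow_explicit[OF MM, of k]
        by (simp add: power_abs) (smt (verit, best) mult_left_mono mult_right_mono norm_ge_zero distrib_right mult.commute)
    qed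
    then show ?thesis by (simp add: divide_right_mono)
  qed
  have sc: "summable (\<lambda>k. c^k / fact k)"
    using exp_converges[of c] by (simp add: sums_iff divide_inverse mult.commute)
  have sm: "summable (\<lambda>k. (1 / fact k) *\<^sub>R mat_pow M k)"
  proof (rule summable_comparison_test'[where N=0])
    show "summable (\<lambda>k. (norm (mat 1 :: real^'n^'n) + norm M) * (c^k / fact k))"
      using summable_mult[OF sc] by simp
  qed (use bnd in auto)
  have bl: "bounded_linear f" using f by (simp add: linear_conv_bounded_linear)
  have "f (mat_exp M) = (\<Sum>k. f ((1 / fact k) *\<^sub>R mat_pow M k))"
    unfolding mat_exp_def by (rule bounded_linear.suminf[OF bl sm])
  also have "\<dots> = (\<Sum>k. (s^k / fact k) *\<^sub>R w)"
    using linear_scale[OF f] fk by simp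
  also have "\<dots> = exp s *\<^sub>R w"
    using sums_scaleR_left[OF exp_converges[of s], of w] by (simp add: sums_iff divide_inverse mult.commute)
  finally show ?thesis .
qed



lemma sum_UNIV_plus:
  "sum f (UNIV::('a::finite+'b::finite) set) = sum (\<lambda>i. f (Inl i)) UNIV + sum (\<lambda>j. f (Inr j)) UNIV"
  using sum.Plus[of "UNIV::'a set" "UNIV::'b set" f] by (simp add: comp_def)

lemma ifmul: "(if c then a else 0) * (b::real) = (if c then a * b else 0)" by simp

definition Mp :: "real \<Rightarrow> ('m::finite \<Rightarrow> real) \<Rightarrow> ('m \<Rightarrow> real) \<Rightarrow> real^('m+'m)^('m+'m)" where
  "Mp s p q = (\<chi> a b. case a of
      Inl i \<Rightarrow> (case b of Inl j \<Rightarrow> if i=j then s*p i else 0 | Inr j \<Rightarrow> if i=j then s*q i else 0)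
    | Inr i \<Rightarrow> (case b of Inl j \<Rightarrow> if i=j then s*q i else 0 | Inr j \<Rightarrow> if i=j then -s*p i else 0))"

lemma Mp_sq:
  fixes p q :: "'m::finite \<Rightarrow> real"
  assumes "\<And>i. p i^2 + q i^2 = 1"
  shows "Mp s p q ** Mp s p q = s^2 *\<^sub>R mat 1"
  unfolding vec_eq_iff
proof (intro allI)
  fix a b
  show "(Mp s p q ** Mp s p q) $ a $ b = (s^2 *\<^sub>R mat 1 :: real^('m+'m)^('m+'m)) $ a $ b"
  proof (cases a; cases b)
    fix i j assume "a = Inl i" "b = Inl j"
    moreover have "s * p i * (s * p i) + s * q i * (s * q i) = s * s * (p i ^ 2 + q i ^ 2)"
      by (simp add: power2_eq_square algebra_simps)
    moreover have "s * q i * (s * q i) + s * p i * (s * p i) = s * s * (p i ^ 2 + q i ^ 2)"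
      by (simp add: power2_eq_square algebra_simps)
    ultimately show ?thesis
      using assms[of i] by (auto simp add: matrix_matrix_mult_def Mp_def sum_UNIV_plus mat_def ifmul power2_eq_square cong: if_cong)
  next
    fix i j assume "a = Inl i" "b = Inr j"
    then show ?thesis
      by (simp add: matrix_matrix_mult_def Mp_def sum_UNIV_plus mat_def ifmul power2_eq_square cong: if_cong)
  next
    fix i j assume "a = Inr i" "b = Inl j"
    then show ?thesis
      by (simp add: matrix_matrix_mult_def Mp_def sum_UNIV_plus mat_def ifmul power2_eq_square cong: if_cong)
  next
    fix i j assume "a = Inr i" "b = Inr j"
    moreover have "s * p i * (s * p i) + s * q i * (s * q i) = s * s * (p i ^ 2 + q i ^ 2)"
      by (simp add: power2_eq_square algebra_simps)
    moreover have "s * q i * (s * q i) + s * p i * (s * p i) = s * s * (p i ^ 2 + q i ^ 2)"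
      by (simp add: power2_eq_square algebra_simps)
    ultimately show ?thesis
      using assms[of i] by (auto simp add: matrix_matrix_mult_def Mp_def sum_UNIV_plus mat_def ifmul power2_eq_square cong: if_cong)
  qed
qed

lemma Mp_sym: "transpose (Mp s p q) = Mp s p q"
  unfolding vec_eq_iff transpose_def Mp_def
  by (auto split: sum.splits)

lemma Mp_eig:
  fixes p q x y :: "'m::finite \<Rightarrow> real"
  assumes "\<And>i. p i * x i + q i * y i = x i" "\<And>i. q i * x i - p i * y i = y i"
  shows "Mp s p q *v (\<chi> a. case a of Inl i \<Rightarrow> x i | Inr i \<Rightarrow> y i)
       = s *\<^sub>R (\<chi> a. case a of Inl i \<Rightarrow> x i | Inr i \<Rightarrow> y i)"
  unfolding vec_eq_iff
proof
  fix a
  show "(Mp s p q *v (\<chi> a. case a of Inl i \<Rightarrow> x i | Inr i \<Rightarrow> y i)) $ a =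
        (s *\<^sub>R (\<chi> a. case a of Inl i \<Rightarrow> x i | Inr i \<Rightarrow> y i)) $ a"
  proof (cases a)
    case (Inl i)
    moreover have "s * (p i * x i) + s * (q i * y i) = s * x i"
      using assms(1)[of i] by (simp add: distrib_left[symmetric])
    ultimately show ?thesis
      by (simp add: matrix_vector_mult_def Mp_def sum_UNIV_plus ifmul cong: if_cong)
  next
    case (Inr i)
    moreover have "s * (q i * x i) - s * (p i * y i) = s * y i"
      using assms(2)[of i] by (simp add: right_diff_distrib[symmetric])
    ultimately show ?thesis
      by (simp add: matrix_vector_mult_def Mp_def sum_UNIV_plus ifmul cong: if_cong)
  qed
qed



definition ph :: "complex \<Rightarrow> complex" where
  "ph z = (if z = 0 then 1 else (z / of_real (cmod z))^2)"

lemma ph_norm: "Re (ph z)^2 + Im (ph z)^2 = 1"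
proof -
  have "cmod (ph z) = 1"
    by (auto simp: ph_def norm_power norm_divide)
  then show ?thesis using cmod_power2[of "ph z"] by simp
qed

lemma ph_eq:
  shows "Re (ph z) * Re z + Im (ph z) * Im z = Re z"
    and "Im (ph z) * Re z - Re (ph z) * Im z = Im z"
proof -
  have a: "cnj (ph z) * z = cnj z" and b: "ph z * cnj z = z"
  proof -
    show "cnj (ph z) * z = cnj z"
    proof (cases "z = 0")
      case False
      have n: "complex_of_real (cmod z) \<noteq> 0" using False by simp
      have "cnj (ph z) * z = cnj z * (cnj z * z) / (of_real (cmod z))^2"
        using False by (simp add: ph_def power2_eq_square field_simps)
      also have "cnj z * z = (of_real (cmod z))^2"
        using complex_norm_square[of z] by (simp add: mult.commute)
      finally show ?thesis using n by simp
    qed (simp add: ph_def)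
    show "ph z * cnj z = z"
    proof (cases "z = 0")
      case False
      have n: "complex_of_real (cmod z) \<noteq> 0" using False by simp
      have "ph z * cnj z = z * (z * cnj z) / (of_real (cmod z))^2"
        using False by (simp add: ph_def power2_eq_square field_simps)
      also have "z * cnj z = (of_real (cmod z))^2"
        using complex_norm_square[of z] by simp
      finally show ?thesis using n by simp
    qed (simp add: ph_def)
  qed
  show "Re (ph z) * Re z + Im (ph z) * Im z = Re z"
    using arg_cong[OF a, of Re] by simp
  show "Im (ph z) * Re z - Re (ph z) * Im z = Im z"
    using arg_cong[OF b, of Im] by (simp add: algebra_simps)
qed



lemma Mp_pow_eig:
  fixes M :: "real^'n^'n"
  assumes "M *v v = s *\<^sub>R v"
  shows "mat_pow M k *v v = s^k *\<^sub>R v"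
  by (induction k) (simp_all add: matrix_vector_mul_assoc[symmetric] matrix_vector_mult_scaleR assms)

lemma exp_eig:
  fixes M :: "real^'n^'n"
  assumes MM: "M ** M = (s^2) *\<^sub>R mat 1" and Mv: "M *v v = s *\<^sub>R v" and T: "transpose M = M"
  shows "mat_exp M *v v = exp s *\<^sub>R v" "transpose (mat_exp M) *v v = exp s *\<^sub>R v"
proof -
  show "mat_exp M *v v = exp s *\<^sub>R v"
    using mat_exp_lin[OF MM linear_mv, of v] Mp_pow_eig[OF Mv] by simp
  have tp: "transpose (mat_pow M k) = mat_pow M k" for k
    using mat_pow_explicit[OF MM, of k] T by (simp add: transpose_scalar)
  show "transpose (mat_exp M) *v v = exp s *\<^sub>R v"
    using mat_exp_lin[OF MM linear_tmv, of v] Mp_pow_eig[OF Mv] tp by simp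
qed

lemma matrix_inv_left':
  fixes A :: "real^'n^'n"
  assumes "invertible A"
  shows "matrix_inv A ** A = mat 1"
  using assms unfolding invertible_def matrix_inv_def
  by (metis (mono_tags, lifting) someI_ex)

theorem lemma31:
  fixes r N :: real and \<theta> :: "complex^'m::finite"
  assumes "r > 0" and "\<theta> \<noteq> 0" and "N \<ge> 0"
  shows "\<exists>\<eta>\<in>(Sqz :: (complex^('m + 'm)^('m + 'm)) set).
           (G \<eta> *v mu \<theta>) \<bullet> (matrix_inv (Sigma_mat \<eta> N) *v (G \<eta> *v mu \<theta>))
             = 4 * r^2 * (norm \<theta>)^2 / ((2 * N + 1) * r^2 + 1)"
proof -
  define s where "s = ln r"
  have es: "exp s = r" using assms(1) by (simp add: s_def)
  define S :: "complex^'m^'m" where "S = (\<chi> i j. if i = j then of_real s * ph (\<theta> $ i) else 0)"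
  define \<eta> :: "complex^('m + 'm)^('m + 'm)" where "\<eta> = block 0 S (cnj_mat S) (cnj_mat 0)"
  define p where "p i = Re (ph (\<theta> $ i))" for i
  define q where "q i = Im (ph (\<theta> $ i))" for i
  define M where "M = Mp s p q"
  define v where "v = mu \<theta>"
  have inS: "\<eta> \<in> Sqz"
    unfolding Sqz_def \<eta>_def anti_hermitian_def symmetric_mat_def
    by (rule CollectI, rule exI[of _ 0], rule exI[of _ S])
       (auto simp: S_def transpose_def vec_eq_iff)
  have bA: "blkA \<eta> = 0" and bS: "blkS \<eta> = S"
    by (simp_all add: blkA_def blkS_def \<eta>_def block_def vec_eq_iff)
  have GM: "G \<eta> = mat_exp M"
  proof -
    have "block (Re_mat (blkA \<eta>) + Re_mat (blkS \<eta>)) (- Im_mat (blkA \<eta>) + Im_mat (blkS \<eta>))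
             (Im_mat (blkA \<eta>) + Im_mat (blkS \<eta>)) (Re_mat (blkA \<eta>) - Re_mat (blkS \<eta>)) = M"
      unfolding bA bS M_def Mp_def block_def vec_eq_iff
      by (auto simp: Re_mat_def Im_mat_def S_def p_def q_def split: sum.splits)
    then show ?thesis by (simp add: G_def Let_def)
  qed
  have MM: "M ** M = s^2 *\<^sub>R mat 1"
    unfolding M_def by (rule Mp_sq) (simp add: p_def q_def ph_norm)
  have MT: "transpose M = M" unfolding M_def by (rule Mp_sym)
  have Mv: "M *v v = s *\<^sub>R v"
    unfolding M_def v_def mu_def
    by (rule Mp_eig) (simp_all add: p_def q_def ph_eq)
  have Gv: "G \<eta> *v v = r *\<^sub>R v" and Gtv: "transpose (G \<eta>) *v v = r *\<^sub>R v"
    using exp_eig[OF MM Mv MT] es GM by simp_all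
  define c where "c = ((2 * N + 1) * r^2 + 1) / 4"
  have cpos: "c > 0" using assms by (simp add: c_def add_pos_nonneg)
  define Sg where "Sg = Sigma_mat \<eta> N"
  have Sgv: "Sg *v x = ((2 * N + 1) / 4) *\<^sub>R (G \<eta> *v (transpose (G \<eta>) *v x)) + (1/4) *\<^sub>R x" for x
    unfolding Sg_def Sigma_mat_def
    by (simp add: matrix_vector_mult_add_rdistrib matrix_vector_mul_assoc[symmetric]
          linear_scale[OF linear_mv])
  have Sg_v: "Sg *v v = c *\<^sub>R v"
    unfolding Sgv Gtv c_def by (simp add: matrix_vector_mult_scaleR Gv algebra_simps power2_eq_square)
       (simp add: scaleR_left_distrib[symmetric] add_divide_distrib)
  have inv: "invertible Sg"
    unfolding invertible_left_inverse matrix_left_invertible_ker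
  proof (intro allI impI)
    fix x assume x0: "Sg *v x = 0"
    have "x \<bullet> (Sg *v x) = ((2 * N + 1) / 4) * ((transpose (G \<eta>) *v x) \<bullet> (transpose (G \<eta>) *v x)) + (1/4) * (x \<bullet> x)"
      unfolding Sgv by (simp add: inner_add_right dot_lmul_matrix[symmetric])
    then have "0 = ((2 * N + 1) / 4) * ((transpose (G \<eta>) *v x) \<bullet> (transpose (G \<eta>) *v x)) + (1/4) * (x \<bullet> x)"
      using x0 by simp
    moreover have "0 \<le> ((2 * N + 1) / 4) * ((transpose (G \<eta>) *v x) \<bullet> (transpose (G \<eta>) *v x))"
      using assms(3) by simp
    ultimately have "x \<bullet> x \<le> 0" by linarith
    then show "x = 0" by (metis inner_ge_zero inner_eq_zero_iff order_antisym)
  qed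
  have Sinv: "matrix_inv Sg *v (r *\<^sub>R v) = (r / c) *\<^sub>R v"
  proof -
    have "r *\<^sub>R v = Sg *v ((r / c) *\<^sub>R v)"
      using cpos by (simp add: matrix_vector_mult_scaleR Sg_v)
    then have "matrix_inv Sg *v (r *\<^sub>R v) = (matrix_inv Sg ** Sg) *v ((r / c) *\<^sub>R v)"
      by (simp add: matrix_vector_mul_assoc)
    then show ?thesis using matrix_inv_left'[OF inv] by simp
  qed
  have vv: "v \<bullet> v = (norm \<theta>)^2"
    unfolding v_def mu_def power2_norm_eq_inner inner_vec_def
    by (simp add: sum_UNIV_plus inner_complex_def sum.distrib)
  have "(G \<eta> *v v) \<bullet> (matrix_inv Sg *v (G \<eta> *v v)) = r * (r / c) * (norm \<theta>)^2"
    unfolding Gv Sinv by (simp add: vv)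
  also have "\<dots> = 4 * r^2 * (norm \<theta>)^2 / ((2 * N + 1) * r^2 + 1)"
    by (simp add: c_def power2_eq_square)
  finally show ?thesis using inS unfolding Sg_def v_def by blast
qed

end
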